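(* Let $n\geq2$, $p=2n-1$, $q=n$ and $k>\frac{2n-1}{n\sqrt{n-1}}$. Then the critical velocity is $$\overline{c}=\frac{kn+\sqrt{k^2n^2-4n}}{2n}.$$
   Context: Consider $u_t=u_{xx}+k(u^n)_x+u^p-u^q$; traveling waves $u=f(x+ct)$ satisfy $f''=cf'-knf^{n-1}f'-f^p+f^q$, equivalently the system $X'=Y$, $Y'=cY-knX^{n-1}Y-X^p+X^q$ ($X=f$, $Y=f'$) with critical points $P_1=(0,0)$, $P_2=(1,0)$. For each $c$, $l_c$ is the unique trajectory leaving $P_1$ (as $\xi\to-\infty$) into $\{X>0,Y>0\}$; it connects directly $P_1$ to $P_2$ if it tends to $P_2$ as $\xi\to\infty$ with $X>0,Y>0$ throughout. The critical velocity is $\overline{c}=\sup\{c: l_c\text{ connects directly }P_1\text{ and }P_2\}$. *)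

theory Defs
  imports "HOL-Analysis.Analysis"
begin

text \<open>Traveling-wave system  X' = Y,  Y' = cY - k n X^(n-1) Y - X^p + X^q,
  with real exponents (only used where X > 0).\<close>

definition tw_solution :: "real \<Rightarrow> real \<Rightarrow> real \<Rightarrow> real \<Rightarrow> real \<Rightarrow>
    (real \<Rightarrow> real) \<Rightarrow> (real \<Rightarrow> real) \<Rightarrow> bool" where
  "tw_solution n k p q c X Y \<longleftrightarrow>
     (\<forall>\<xi>. (X has_real_derivative Y \<xi>) (at \<xi>) \<and>
          (Y has_real_derivative
             (c * Y \<xi> - k * n * X \<xi> powr (n - 1) * Y \<xi> - X \<xi> powr p + X \<xi> powr q)) (at \<xi>))"

text \<open>l_c connects P1=(0,0) directly to P2=(1,0): there is a trajectory of the system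
  lying in the open first quadrant for all \<xi>, tending to P1 as \<xi> \<rightarrow> -\<infinity> and to P2
  as \<xi> \<rightarrow> +\<infinity>.  (By the uniqueness of the trajectory l_c leaving P1 into the open
  first quadrant, such a trajectory is necessarily l_c.)\<close>

definition connects_directly :: "real \<Rightarrow> real \<Rightarrow> real \<Rightarrow> real \<Rightarrow> real \<Rightarrow> bool" where
  "connects_directly n k p q c \<longleftrightarrow>
     (\<exists>X Y. tw_solution n k p q c X Y \<and>
        (\<forall>\<xi>. X \<xi> > 0 \<and> Y \<xi> > 0) \<and>
        (X \<longlongrightarrow> 0) at_bot \<and> (Y \<longlongrightarrow> 0) at_bot \<and>
        (X \<longlongrightarrow> 1) at_top \<and> (Y \<longlongrightarrow> 0) at_top)"

definition critical_velocity :: "real \<Rightarrow> real \<Rightarrow> real \<Rightarrow> real \<Rightarrow> real" where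
  "critical_velocity n k p q = Sup {c. connects_directly n k p q c}"

end

theory Submission
  imports Defs "HOL-Real_Asymp.Real_Asymp"
begin


lemma Cfacts:
  fixes n k :: real
  assumes n2: "n \<ge> 2"
    and kb: "k > (2 * n - 1) / (n * sqrt (n - 1))"
  defines "C \<equiv> (k * n + sqrt (k\<^sup>2 * n\<^sup>2 - 4 * n)) / (2 * n)"
  shows "n * C^2 - k * n * C + 1 = 0" "0 < C" "C < k" "C^2 * (n - 1) > 1" "k > 0"
proof -
  define \<sigma> where "\<sigma> = sqrt (n - 1)"
  have \<sigma>1: "\<sigma> \<ge> 1" using n2 by (simp add: \<sigma>_def)
  have \<sigma>sq: "\<sigma>^2 = n - 1" using n2 by (simp add: \<sigma>_def)
  have kb2: "k * (n * \<sigma>) > 2 * n - 1" using kb \<sigma>1 n2 unfolding \<sigma>_def[symmetric]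
    by (simp add: divide_less_eq mult.commute)
  show kpos: "k > 0"
  proof (rule ccontr)
    assume "\<not> k > 0"
    hence "k * (n * \<sigma>) \<le> 0" using \<sigma>1 n2 by (simp add: mult_nonpos_nonneg)
    thus False using kb2 n2 by linarith
  qed
  have "(k * (n * \<sigma>))^2 > (2*n-1)^2" using power_strict_mono[OF kb2, of 2] n2 by simp
  hence "k^2 * n^2 * (n - 1) > (2*n-1)^2" by (simp add: power_mult_distrib \<sigma>sq)
  moreover have "(2*n-1)^2 \<ge> 4 * n * (n - 1)" by (simp add: power2_eq_square algebra_simps)
  ultimately have "k^2 * n^2 * (n - 1) > 4 * n * (n-1)" by linarith
  hence D: "k^2 * n^2 > 4 * n" using n2 by simp
  define s where "s = sqrt (k\<^sup>2 * n\<^sup>2 - 4 * n)"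
  have s0: "s > 0" using D by (simp add: s_def)
  have ssq: "s^2 = k^2*n^2 - 4*n" using D by (simp add: s_def)
  have Cd: "C = (k*n + s) / (2*n)" by (simp add: C_def s_def)
  have "n * C^2 - k * n * C + 1 = (s^2 - k^2*n^2 + 4*n) / (4*n)" unfolding Cd using n2
    by (simp add: field_simps power2_eq_square)
  thus "n * C^2 - k * n * C + 1 = 0" using ssq by simp
  show "0 < C" unfolding Cd using n2 kpos s0 by (simp add: add_pos_pos)
  have "s < k * n" 
  proof -
    have "s^2 < (k*n)^2" using ssq n2 by (simp add: power_mult_distrib)
    moreover have "0 \<le> k * n" using kpos n2 by simp
    ultimately show ?thesis by (rule power_less_imp_less_base)
  qed
  thus "C < k" unfolding Cd using n2 by (simp add: field_simps)
  have key: "(k*n + s) * \<sigma> > 2 * n"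
  proof (cases "2*n/\<sigma> - k*n < 0")
    case True
    hence "k * n * \<sigma> > 2 * n" using \<sigma>1 by (simp add: field_simps)
    moreover have "s * \<sigma> > 0" using s0 \<sigma>1 by simp
    ultimately show ?thesis by (simp add: distrib_right)
  next
    case False
    have "(2*n/\<sigma> - k*n)^2 < s^2"
    proof -
      have "(2*n/\<sigma> - k*n)^2 = 4*n^2/\<sigma>^2 - 4*k*n^2/\<sigma> + k^2*n^2" using \<sigma>1
        by (simp add: power2_eq_square field_simps)
      also have "\<dots> < k^2*n^2 - 4*n"
      proof -
        have "k * n * \<sigma> > 2*\<sigma>^2 + 1" using kb2 \<sigma>sq by (simp add: algebra_simps)
        hence "k * n * \<sigma> > \<sigma>^2 + n" using \<sigma>sq by simp
        hence "4*n*(k * n * \<sigma>) > 4*n*(\<sigma>^2 + n)" using n2 by simp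
        hence "4*n^2/\<sigma>^2 - 4*k*n^2/\<sigma> < - 4*n" using \<sigma>1
          by (simp add: field_simps power2_eq_square)
        thus ?thesis by simp
      qed
      finally show ?thesis using ssq by simp
    qed
    hence "2*n/\<sigma> - k*n < s" using s0 by (meson power_less_imp_less_base less_imp_le)
    thus ?thesis using \<sigma>1 by (simp add: field_simps)
  qed
  hence "C * \<sigma> > 1" unfolding Cd using n2 by (simp add: field_simps)
  hence "(C * \<sigma>)^2 > 1" using one_less_power[of "C*\<sigma>" 2] by simp
  thus "C^2 * (n - 1) > 1" by (simp add: power_mult_distrib \<sigma>sq)
qed



lemma ode_identity:
  fixes n k C c X P Y :: real
  assumes eq: "n * C^2 - k * n * C + 1 = 0"
  shows "(c * Y - k * n * P * Y - X * P * P + X * P) - C * (Y - n * P * Y)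
       = (c - C) * Y + n * P * (C - k) * (Y - C * (X - X * P))"
proof -
  have "(c * Y - k * n * P * Y - X * P * P + X * P) - C * (Y - n * P * Y)
       - ((c - C) * Y + n * P * (C - k) * (Y - C * (X - X * P)))
        = X * P * (1 - P) * (n * C^2 - k * n * C + 1)"
    by (simp add: algebra_simps power2_eq_square)
  thus ?thesis using eq by simp
qed

lemma powr_split:
  fixes x n :: real assumes "x > 0"
  shows "x powr n = x * x powr (n - 1)" "x powr (2 * n - 1) = x * x powr (n-1) * x powr (n-1)"
proof -
  show "x powr n = x * x powr (n - 1)" using assms powr_add[of x 1 "n-1"] by simp
  have e: "2 * n - 1 = 1 + (n - 1) + (n - 1)" by simp
  have "x powr (2 * n - 1) = x powr (1 + (n - 1) + (n - 1))" by (subst e) (rule refl)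
  also have "\<dots> = x * x powr (n-1) * x powr (n-1)" unfolding powr_add using assms by simp
  finally show "x powr (2 * n - 1) = x * x powr (n-1) * x powr (n-1)" .
qed

lemma exist:
  fixes n k C :: real
  assumes n2: "n \<ge> 2" and C0: "C > 0" and eq: "n * C^2 - k * n * C + 1 = 0"
  shows "connects_directly n k (2 * n - 1) n C"
proof -
  define m where "m = n - 1"
  have m0: "m > 0" using n2 by (simp add: m_def)
  define a where "a = m * C"
  have a0: "a > 0" using m0 C0 by (simp add: a_def)
  define E where "E = (\<lambda>x::real. exp (- a * x))"
  define D where "D = (\<lambda>x. 1 + E x)"
  define X where "X = (\<lambda>x. exp (- ln (D x) / m))"
  define Y where "Y = (\<lambda>x. C * (X x - X x powr n))"
  have D1: "D x > 1" for x by (simp add: D_def E_def)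
  have X0: "X x > 0" for x by (simp add: X_def)
  have Xpow: "X x powr r = exp (- r * ln (D x) / m)" for x r
    using X0[of x] by (simp add: powr_def X_def)
  have XnD: "X x powr n = X x / D x" for x
  proof -
    have "X x powr n = exp (- ln (D x) / m - ln (D x))" unfolding Xpow
      using m0 by (simp add: m_def field_simps)
    also have "\<dots> = X x / D x" using D1[of x] by (simp add: exp_diff X_def)
    finally show ?thesis .
  qed
  have Yalt: "Y x = C * X x * (E x / D x)" for x
    using D1[of x] unfolding Y_def XnD by (simp add: D_def field_simps)
  have Xlt1: "X x < 1" for x using D1[of x] m0 by (simp add: X_def)
  have Ypos: "Y x > 0" for x unfolding Yalt using C0 X0[of x] D1[of x] by (simp add: E_def)
  have dX: "(X has_real_derivative Y x) (at x)" for x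
  proof -
    have "(X has_real_derivative X x * (- (1 / D x * (- a * E x)) / m)) (at x)"
      unfolding X_def D_def E_def
      using D1[of x] m0 unfolding D_def E_def
      by (auto intro!: derivative_eq_intros simp: add_pos_pos)
    moreover have "X x * (- (1 / D x * (- a * E x)) / m) = Y x"
      unfolding Yalt a_def using m0 D1[of x] by (simp add: field_simps)
    ultimately show ?thesis by simp
  qed
  have dY: "(Y has_real_derivative
       (C * Y x - k * n * X x powr (n - 1) * Y x - X x powr (2*n-1) + X x powr n)) (at x)" for x
  proof -
    have dp: "((\<lambda>x. X x powr n) has_real_derivative (n * X x powr (n - 1)) * Y x) (at x)"
      by (rule DERIV_chain2[OF has_real_derivative_powr[OF X0] dX])
    have "(Y has_real_derivative C * (Y x - n * X x powr (n - 1) * Y x)) (at x)"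
    proof -
      have d: "((\<lambda>x. C * (X x - X x powr n)) has_real_derivative C * (Y x - n * X x powr (n - 1) * Y x)) (at x)"
        by (intro DERIV_cmult DERIV_diff dX dp)
      have e: "(\<lambda>x. C * (X x - X x powr n)) = Y" by (simp add: Y_def)
      show ?thesis using d unfolding e .
    qed
    moreover have "C * (Y x - n * X x powr (n - 1) * Y x) =
       C * Y x - k * n * X x powr (n - 1) * Y x - X x powr (2*n-1) + X x powr n"
    proof -
      define P where "P = X x powr (n-1)"
      have z0: "Y x - C * (X x - X x * P) = 0" unfolding Y_def P_def using powr_split(1)[OF X0[of x], of n] by simp
      have id: "(C * Y x - k * n * P * Y x - X x * P * P + X x * P) - C * (Y x - n * P * Y x) = 0"
        using ode_identity[OF eq, of C "Y x" P "X x"] unfolding z0 by simp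
      show ?thesis unfolding powr_split[OF X0[of x], of n] P_def[symmetric] using id by linarith
    qed
    ultimately show ?thesis by (rule DERIV_cong)
  qed
  have limXb: "(X \<longlongrightarrow> 0) at_bot" and limXt: "(X \<longlongrightarrow> 1) at_top"
    unfolding X_def D_def E_def using a0 m0 by real_asymp+
  have iDb: "((\<lambda>x. 1 / D x) \<longlongrightarrow> 0) at_bot" and Dt: "(D \<longlongrightarrow> 1) at_top"
    unfolding D_def E_def using a0 by real_asymp+
  have "((\<lambda>x. C * (X x - X x * (1 / D x))) \<longlongrightarrow> C * (0 - 0 * 0)) at_bot"
    by (intro tendsto_intros limXb iDb)
  hence limYb: "(Y \<longlongrightarrow> 0) at_bot" unfolding Y_def XnD by simp
  have "((\<lambda>x. C * (X x - X x / D x)) \<longlongrightarrow> C * (1 - 1 / 1)) at_top"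
    by (intro tendsto_intros limXt Dt) simp
  hence limYt: "(Y \<longlongrightarrow> 0) at_top" unfolding Y_def XnD by simp
  show ?thesis unfolding connects_directly_def tw_solution_def
    using dX dY X0 Ypos limXb limXt limYb limYt by blast
qed



lemma nonexist:
  fixes n k C c :: real and X Y :: "real \<Rightarrow> real"
  assumes n2: "n \<ge> 2" and C0: "C > 0" and Ck: "C < k" and eq: "n * C^2 - k * n * C + 1 = 0"
    and Cn: "C^2 * (n - 1) > 1" and cC: "c > C"
    and sol: "tw_solution n k (2 * n - 1) n c X Y"
    and pos: "\<forall>\<xi>. X \<xi> > 0 \<and> Y \<xi> > 0"
    and lX0: "(X \<longlongrightarrow> 0) at_bot" and lY0: "(Y \<longlongrightarrow> 0) at_bot" and lX1: "(X \<longlongrightarrow> 1) at_top"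
  shows False
proof -
  have X0: "X t > 0" and Y0: "Y t > 0" for t using pos by auto
  have dX: "(X has_real_derivative Y t) (at t)" for t using sol unfolding tw_solution_def by blast
  have dY: "(Y has_real_derivative (c * Y t - k * n * X t powr (n - 1) * Y t
       - X t powr (2 * n - 1) + X t powr n)) (at t)" for t
    using sol unfolding tw_solution_def by blast
  have inc: "X s < X t" if "s < t" for s t
    using DERIV_pos_imp_increasing[of s t X] that dX Y0 by blast
  have Xlt1: "X t < 1" for t
  proof (rule ccontr)
    assume "\<not> X t < 1"
    have "X (t+1) \<le> 1"
    proof (rule tendsto_lowerbound[OF lX1])
      show "\<forall>\<^sub>F i in at_top. X (t + 1) \<le> X i"
        unfolding eventually_at_top_linorder
        by (rule exI[of _ "t+1"]) (auto intro: less_imp_le inc simp: order.order_iff_strict)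
    qed simp
    moreover have "X t < X (t+1)" by (rule inc) simp
    ultimately show False using \<open>\<not> X t < 1\<close> by linarith
  qed
  define P where "P = (\<lambda>t. X t powr (n - 1))"
  have P0: "P t > 0" for t unfolding P_def using X0[of t] by simp
  have P1: "P t \<le> 1" for t unfolding P_def using X0[of t] Xlt1[of t] n2
    by (intro powr_le1) auto
  have Xn: "X t powr n = X t * P t" for t unfolding P_def by (rule powr_split(1)[OF X0[of t], of n])
  have X2n: "X t powr (2 * n - 1) = X t * P t * P t" for t
    unfolding P_def by (rule powr_split(2)[OF X0[of t], of n])
  have nCk: "n * (C - k) = - 1 / C" using eq C0
    by (simp add: field_simps power2_eq_square)
  define z where "z = (\<lambda>t. Y t - C * (X t - X t powr n))"
  have dz: "(z has_real_derivative (c - C) * Y t - P t * z t / C) (at t)" for t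
  proof -
    have dp: "((\<lambda>x. X x powr n) has_real_derivative (n * X t powr (n - 1)) * Y t) (at t)"
      by (rule DERIV_chain2[OF has_real_derivative_powr[OF X0] dX])
    have d: "(z has_real_derivative (c * Y t - k * n * X t powr (n - 1) * Y t
       - X t powr (2 * n - 1) + X t powr n) - C * (Y t - n * X t powr (n - 1) * Y t)) (at t)"
    proof -
      have d0: "((\<lambda>t. Y t - C * (X t - X t powr n)) has_real_derivative (c * Y t - k * n * X t powr (n - 1) * Y t
       - X t powr (2 * n - 1) + X t powr n) - C * (Y t - n * X t powr (n - 1) * Y t)) (at t)"
        by (intro DERIV_diff DERIV_cmult dY dX dp)
      have e: "(\<lambda>t. Y t - C * (X t - X t powr n)) = z" by (simp add: z_def)
      show ?thesis using d0 unfolding e .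
    qed
    have "(c * Y t - k * n * X t powr (n - 1) * Y t
       - X t powr (2 * n - 1) + X t powr n) - C * (Y t - n * X t powr (n - 1) * Y t)
       = (c - C) * Y t + n * P t * (C - k) * (Y t - C * (X t - X t * P t))"
    proof -
      have Pt: "X t powr (n - 1) = P t" by (simp add: P_def)
      show ?thesis unfolding X2n Xn Pt by (rule ode_identity[OF eq])
    qed
    also have "\<dots> = (c - C) * Y t + (n * (C - k)) * P t * z t"
      unfolding z_def Xn by (simp add: algebra_simps)
    also have "\<dots> = (c - C) * Y t - P t * z t / C" unfolding nCk by simp
    finally show ?thesis using d by simp
  qed
  have zcont: "continuous_on A z" for A
    by (rule has_real_derivative_imp_continuous_on[OF dz])
  have dzpos: "(c - C) * Y t - P t * z t / C > 0" if "z t \<le> 0" for t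
  proof -
    have "(c - C) * Y t > 0" using cC Y0[of t] by simp
    moreover have "P t * z t / C \<le> 0" using P0[of t] that C0
      by (simp add: divide_nonpos_pos mult_pos_neg mult_nonneg_nonpos)
    ultimately show ?thesis by linarith
  qed
  have zback: "z s < z t" if st: "s < t" and zt: "z t \<le> 0" for s t
  proof (rule ccontr)
    assume "\<not> z s < z t"
    hence zst: "z t \<le> z s" by simp
    obtain u where u: "u \<in> {s..t}" and umin: "\<forall>y\<in>{s..t}. z u \<le> z y"
      using continuous_attains_inf[of "{s..t}" z] zcont st by auto
    define v where "v = (if u = s then t else u)"
    have v: "v \<in> {s<..t}" using u st by (auto simp: v_def)
    have vmin: "\<forall>y\<in>{s..t}. z v \<le> z y"
    proof (cases "u = s")
      case True
      hence "z t \<le> z u" using zst by simp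
      moreover have "z u \<le> z t" using umin st by auto
      ultimately show ?thesis using umin True by (simp add: v_def)
    next
      case False thus ?thesis using umin by (simp add: v_def)
    qed
    have "t \<in> {s..t}" using st by simp
    hence "z v \<le> z t" using vmin by blast
    hence "z v \<le> 0" using zt by linarith
    then obtain d where d: "d > 0" "\<forall>h>0. h < d \<longrightarrow> z (v - h) < z v"
      using DERIV_pos_inc_left[OF dz dzpos] by blast
    define h where "h = min (d/2) ((v - s)/2)"
    have h: "h > 0" "h < d" using d v by (auto simp: h_def)
    have "h \<le> (v - s) / 2" unfolding h_def by (rule min.cobounded2)
    hence "v - h \<in> {s..t}" using v h by auto
    hence "z v \<le> z (v - h)" using vmin by blast
    thus False using d h by force
  qed
  have lz0: "(z \<longlongrightarrow> 0) at_bot"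
  proof -
    have "((\<lambda>t. X t powr n) \<longlongrightarrow> 0) at_bot"
      by (rule tendsto_zero_powrI[OF lX0 tendsto_const]) (use X0 n2 in \<open>auto simp: less_imp_le\<close>)
    hence "((\<lambda>t. Y t - C * (X t - X t powr n)) \<longlongrightarrow> 0 - C * (0 - 0)) at_bot"
      by (intro tendsto_intros lY0 lX0)
    thus ?thesis by (simp add: z_def)
  qed
  have zpos: "z t > 0" for t
  proof (rule ccontr)
    assume "\<not> z t > 0"
    hence zt: "z t \<le> 0" by simp
    have z1: "z (t - 1) < 0" using zback[of "t - 1" t] zt by simp
    have "0 \<le> z (t - 1)"
    proof (rule tendsto_upperbound[OF lz0])
      show "\<forall>\<^sub>F i in at_bot. z i \<le> z (t - 1)"
        unfolding eventually_at_bot_linorder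
        by (rule exI[of _ "t - 1"]) (auto simp: order.order_iff_strict intro: zback z1[THEN less_imp_le] less_imp_le)
    qed simp
    thus False using z1 by simp
  qed
  define \<psi> where "\<psi> = (\<lambda>u::real. C * (u - u powr n) - (1 - u) / C)"
  have d\<psi>: "(\<psi> has_real_derivative C * (1 - n * 1 powr (n - 1)) + 1 / C) (at 1)"
    unfolding \<psi>_def using C0 by (auto intro!: derivative_eq_intros has_real_derivative_powr)
  have neg: "C * (1 - n * 1 powr (n - 1)) + 1 / C < 0"
  proof -
    have "C * (n - 1) > 1 / C" using Cn C0 by (simp add: field_simps power2_eq_square)
    thus ?thesis by (simp add: algebra_simps)
  qed
  obtain d where d: "d > 0" "\<forall>h>0. h < d \<longrightarrow> \<psi> 1 < \<psi> (1 - h)"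
    using DERIV_neg_dec_left[OF d\<psi> neg] by blast
  have \<psi>1: "\<psi> 1 = 0" by (simp add: \<psi>_def)
  have "\<forall>\<^sub>F t in at_top. 1 - d < X t" by (rule order_tendstoD(1)[OF lX1]) (use d in simp)
  then obtain T where T: "\<And>t. t \<ge> T \<Longrightarrow> 1 - d < X t" unfolding eventually_at_top_linorder by blast
  have hb: "C * (X t - X t powr n) \<ge> (1 - X t) / C" if "t \<ge> T" for t
  proof -
    have h1: "1 - X t > 0" using Xlt1[of t] by simp
    have h2: "1 - X t < d" using T[OF that] by simp
    have "\<psi> 1 < \<psi> (1 - (1 - X t))" using d(2) h1 h2 by blast
    thus ?thesis unfolding \<psi>1 by (simp add: \<psi>_def)
  qed
  define \<phi> where "\<phi> = (\<lambda>t. t + (1 - X t) / z t)"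
  have d\<phi>: "(\<phi> has_real_derivative 1 + ((- Y t) * z t - (1 - X t) * ((c - C) * Y t - P t * z t / C)) / (z t * z t)) (at t)" for t
    unfolding \<phi>_def using zpos[of t]
    by (intro derivative_eq_intros dX dz) (auto simp: dX dz)
  have d\<phi>neg: "1 + ((- Y t) * z t - (1 - X t) * ((c - C) * Y t - P t * z t / C)) / (z t * z t) \<le> 0"
    if "t \<ge> T" for t
  proof -
    define x where "x = 1 - X t"
    have x0: "x > 0" using Xlt1[of t] by (simp add: x_def)
    have zt: "z t > 0" by (rule zpos)
    have Yz: "Y t = z t + C * (X t - X t powr n)" by (simp add: z_def)
    have Ygt: "Y t \<ge> z t + x / C" using hb[OF that] Yz by (simp add: x_def)
    have "x * ((c - C) * Y t - P t * z t / C) \<ge> x * (- z t / C)"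
    proof (rule mult_left_mono)
      have "(c - C) * Y t \<ge> 0" using cC Y0[of t] by simp
      moreover have "P t * z t / C \<le> z t / C" using P1[of t] zt C0
        by (simp add: divide_right_mono mult_left_le_one_le)
      ultimately show "(c - C) * Y t - P t * z t / C \<ge> - z t / C" by simp
    qed (use x0 in simp)
    moreover have "Y t * z t \<ge> (z t + x / C) * z t" using Ygt zt by (simp add: mult_right_mono)
    ultimately have A: "(- Y t) * z t - x * ((c - C) * Y t - P t * z t / C) \<le> - (z t * z t)"
      by (simp add: algebra_simps)
    have "((- Y t) * z t - x * ((c - C) * Y t - P t * z t / C)) / (z t * z t) \<le> -1"
      using A zt by (simp add: divide_le_eq)
    thus ?thesis by (simp add: x_def)
  qed
  define t where "t = max T (\<phi> T) + 1"
  have tT: "T \<le> t" by (simp add: t_def)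
  have "\<phi> t \<le> \<phi> T"
    by (rule DERIV_nonpos_imp_nonincreasing[OF tT]) (use d\<phi> d\<phi>neg in blast)
  moreover have "\<phi> t > t" unfolding \<phi>_def using zpos[of t] Xlt1[of t] by simp
  moreover have "t > \<phi> T" by (simp add: t_def)
  ultimately show False by linarith
qed


theorem mainTheorem13:
  fixes n k :: real
  assumes "n \<ge> 2"
    and "k > (2 * n - 1) / (n * sqrt (n - 1))"
  shows "{c. connects_directly n k (2 * n - 1) n c} \<noteq> {}
    \<and> bdd_above {c. connects_directly n k (2 * n - 1) n c}
    \<and> critical_velocity n k (2 * n - 1) n = (k * n + sqrt (k\<^sup>2 * n\<^sup>2 - 4 * n)) / (2 * n)"
proof -
  define C where "C = (k * n + sqrt (k\<^sup>2 * n\<^sup>2 - 4 * n)) / (2 * n)"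
  note CF = Cfacts[OF assms, folded C_def]
  define S where "S = {c. connects_directly n k (2 * n - 1) n c}"
  have CS: "C \<in> S" unfolding S_def using exist[OF assms(1) CF(2) CF(1)] by simp
  have ub: "c \<le> C" if "c \<in> S" for c
  proof (rule ccontr)
    assume "\<not> c \<le> C"
    hence cC: "c > C" by simp
    from that obtain X Y where "tw_solution n k (2 * n - 1) n c X Y" "\<forall>\<xi>. X \<xi> > 0 \<and> Y \<xi> > 0"
      "(X \<longlongrightarrow> 0) at_bot" "(Y \<longlongrightarrow> 0) at_bot" "(X \<longlongrightarrow> 1) at_top"
      unfolding S_def connects_directly_def by blast
    thus False using nonexist[OF assms(1) CF(2) CF(3) CF(1) CF(4) cC] by blast
  qed
  have "Sup S = C" by (rule cSup_eq_maximum[OF CS]) (use ub in blast)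
  moreover have "bdd_above S" using ub by (intro bdd_aboveI) blast
  ultimately show ?thesis using CS unfolding S_def critical_velocity_def C_def by auto
qed

end
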